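(* For every nonnegative integer $r$, $$\sum_{n=1}^{\infty}\frac{1}{(n+1)(2n+3)(2n+2r+3)}\frac{\binom{2n}{n}}{\binom{2n+2r+2}{n+r+1}}=\frac{1}{2(2r+1)\binom{2r}{r}}-\frac{1}{3(2r+3)\binom{2r+2}{r+1}}-\frac{1}{2^{2r+1}}\left(\frac{1}{4(r+1)}+\frac{\binom{2r}{r}}{2\cdot 4^{r+1}}\left(\frac{\pi^2}{2}+\sum_{k=1}^r\frac{4^k}{k^2\binom{2k}{k}}\right)\right).$$ *)

theory Defs
  imports "HOL-Analysis.Analysis"
begin

end

theory Submission
  imports Defs "HOL-Analysis.Analysis"
begin

definition cc :: "nat \<Rightarrow> real" where "cc n = real ((2*n) choose n)"

lemma cc_pos: "cc n > 0" unfolding cc_def by simp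

lemma cc_fact: "cc n = fact (2*n) / (fact n * fact n)"
  unfolding cc_def by (subst binomial_fact) (auto simp: mult_2)

lemma cc_Suc: "cc (Suc n) = cc n * (2*(2*real n+1)) / (real n + 1)"
proof -
  have e: "2 * Suc n = Suc (Suc (2*n))" by simp
  have "fact (2 * Suc n) = (2*real n+2)*(2*real n+1)* (fact (2*n)::real)"
    unfolding e by (simp add: algebra_simps)
  moreover have "fact (Suc n) = (real n + 1) * (fact n::real)" by simp
  moreover have "fact n > (0::real)" by simp
  ultimately show ?thesis unfolding cc_fact
    by (simp add: divide_simps) (simp add: algebra_simps)
qed

lemma lin_ratio:
  fixes a b c :: real assumes c: "c > 0" and b: "b \<ge> 0" and a: "a \<ge> 0"
  shows "(\<lambda>n. (c*real n + a)/(c*real n + b)) \<longlonglongrightarrow> 1"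
proof -
  have "(\<lambda>n. (c + a*(1/real n))/(c + b*(1/real n))) \<longlonglongrightarrow> (c + a*0)/(c+b*0)"
    using c by (intro tendsto_intros lim_inverse_n') auto
  then have lim: "(\<lambda>n. (c + a*(1/real n))/(c + b*(1/real n))) \<longlonglongrightarrow> 1" using c by simp
  have "eventually (\<lambda>n. (c + a*(1/real n))/(c + b*(1/real n)) = (c*real n + a)/(c*real n + b)) sequentially"
    using eventually_gt_at_top[of 0]
  proof eventually_elim
    case (elim n)
    then have "real n > 0" by simp
    moreover have "c*real n + b > 0" using c b \<open>real n > 0\<close> by (simp add: add_pos_nonneg)
    moreover have "c + a*(1/real n) = (c*real n + a)/real n" "c + b*(1/real n) = (c*real n + b)/real n"
      using \<open>real n > 0\<close> by (simp_all add: field_simps)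
    ultimately show ?case by simp
  qed
  then show ?thesis by (rule Lim_transform_eventually[OF lim])
qed

lemma cc_ratio_lim: "(\<lambda>n. cc n / cc (n + k)) \<longlonglongrightarrow> 1 / 4 ^ k"
proof (induction k)
  case 0
  then show ?case using cc_pos by (simp add: less_imp_neq[symmetric])
next
  case (Suc k)
  have r: "(\<lambda>n. (4*real n + (4*real k + 4))/(4*real n + (4*real k + 2))) \<longlonglongrightarrow> 1"
    by (rule lin_ratio) auto
  have "(\<lambda>n. cc n / cc (n + k) * ((1/4) * ((4*real n + (4*real k + 4))/(4*real n + (4*real k + 2)))))
        \<longlonglongrightarrow> 1 / 4 ^ k * ((1/4) * 1)"
    by (intro tendsto_intros Suc r)
  moreover have "cc n / cc (n + k) * ((1/4) * ((4*real n + (4*real k + 4))/(4*real n + (4*real k + 2))))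
      = cc n / cc (n + Suc k)" for n
  proof -
    have e: "cc (n + Suc k) = cc (n+k) * (2*(2*real (n+k)+1)) / (real (n+k) + 1)"
      using cc_Suc[of "n+k"] by simp
    show ?thesis unfolding e using cc_pos[of "n+k"] cc_pos[of n]
      by (simp add: divide_simps) (simp add: algebra_simps)
  qed
  ultimately show ?case by (simp add: mult.commute)
qed

lemma odd_sq: "(\<lambda>k. 1/(2*real k+1)^2) sums (pi^2/8)"
proof -
  define f :: "nat \<Rightarrow> real" where "f n = 1/(real n + 1)^2" for n
  have F: "f sums (pi^2/6)" unfolding f_def using inverse_squares_sums by (simp add: add.commute)
  have G: "(\<lambda>n. sum f {n*2..<n*2+2}) sums (pi^2/6)" by (rule sums_group[OF F]) simp
  have eqA: "(\<lambda>n. sum f {n*2..<n*2+2}) = (\<lambda>n. f (2*n) + f (2*n+1))"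
  proof (rule ext)
    fix n :: nat
    have "{n*2..<n*2+2} = {2*n, 2*n+1}" by auto
    then show "sum f {n*2..<n*2+2} = f (2*n) + f (2*n+1)" by simp
  qed
  have A: "(\<lambda>n. f (2*n) + f (2*n+1)) sums (pi^2/6)" using G unfolding eqA .
  have B0: "(\<lambda>n. (1/4) * f n) sums ((1/4)*(pi^2/6))" by (rule sums_mult[OF F])
  have eqB: "(\<lambda>n. (1/4) * f n) = (\<lambda>n. f (2*n+1))"
  proof (rule ext)
    fix n
    have "real (2*n+1) + 1 = 2 * (real n + 1)" by simp
    then show "(1/4) * f n = f (2*n+1)" unfolding f_def by (simp add: power2_eq_square algebra_simps)
  qed
  have B: "(\<lambda>n. f (2*n+1)) sums ((1/4)*(pi^2/6))" using B0 unfolding eqB .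
  have C: "(\<lambda>n. (f (2*n) + f (2*n+1)) - f (2*n+1)) sums (pi^2/6 - (1/4)*(pi^2/6))"
    by (rule sums_diff[OF A B])
  have eqC: "(\<lambda>n. (f (2*n) + f (2*n+1)) - f (2*n+1)) = (\<lambda>k. 1/(2*real k+1)^2)"
    by (rule ext) (simp add: f_def)
  have eqD: "pi^2/6 - (1/4)*(pi^2/6) = pi^2/(8::real)" by (simp add: field_simps)
  show ?thesis using C unfolding eqC eqD .
qed

lemma lim3: "(\<lambda>n. 1 / (2 * real n + 3)) \<longlonglongrightarrow> 0"
proof -
  have "filterlim (\<lambda>n. 3 + 2 * real n) at_top sequentially"
    by (intro filterlim_tendsto_add_at_top[OF tendsto_const] filterlim_tendsto_pos_mult_at_top[OF tendsto_const] filterlim_real_sequentially) auto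
  then have "filterlim (\<lambda>n. 2 * real n + 3) at_top sequentially" by (simp add: add.commute)
  then show ?thesis
    by (intro tendsto_divide_0[OF tendsto_const] filterlim_at_top_imp_at_infinity)
qed

definition T :: "nat \<Rightarrow> nat \<Rightarrow> real" where
  "T r m = 1/(real(m+2)*real(2*m+5)*real(2*m+2*r+5)) * (cc(m+1)/cc(m+r+2))"

definition SS :: "nat \<Rightarrow> real" where
  "SS r = 1/(2*real(2*r+1)*cc r) - 1/(3*real(2*r+3)*cc(r+1))
     - 1/2^(2*r+1) * (1/(4*real(r+1)) + cc r/(2*4^(r+1)) * (pi^2/2 + (\<Sum>k=1..r. 4^k/(real k^2 * cc k))))"

lemma ratio_cancel: "(a::real) \<noteq> 0 \<Longrightarrow> K \<noteq> 0 \<Longrightarrow> a/(a*K/L) = L/K"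
  by simp
lemma base_alg:
  fixes x a :: real assumes x: "x \<ge> 0" and a: "a > 0"
  shows "1/((x+2)*(2*x+5)*(2*x+5)) * (a/(a*(2*(2*(x+1)+1))/((x+1)+1)))
     = (1/8)*(1/(2*x+3) - 1/(2*x+5)) - (1/4)*(1/(2*x+5)^2)"
proof -
  have nz: "x+2 \<noteq> 0" "2*x+5\<noteq>0" "2*x+3\<noteq>0" "a \<noteq> 0" using x a by auto
  have r: "a/(a*(2*(2*(x+1)+1))/((x+1)+1)) = (x+2)/(2*(2*x+3))"
    by (subst ratio_cancel) (use x a in \<open>auto simp: algebra_simps\<close>)
  show ?thesis unfolding r using nz apply (simp add: divide_simps power2_eq_square)
    done
qed
lemma base: "T 0 sums SS 0"
proof -
  have "(\<lambda>n. 1/(2*real (n+2)+1)^2) sums (pi^2/8 - (\<Sum>i<2. 1/(2*real i+1)^2))"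
    using sums_split_initial_segment[OF odd_sq, of 2] by simp
  then have O: "(\<lambda>n. 1/(2*real n+5)^2) sums (pi^2/8 - 10/9)"
    by (simp add: numeral_2_eq_2 algebra_simps)
  have "(\<lambda>n. 1/(2*real n+3) - 1/(2*real (Suc n)+3)) sums (1/(2*real 0+3) - 0)"
    by (rule telescope_sums'[OF lim3])
  then have Tl: "(\<lambda>n. 1/(2*real n+3) - 1/(2*real n+5)) sums (1/3)"
    by (simp add: algebra_simps)
  have S1: "(\<lambda>n. (1/8)*(1/(2*real n+3) - 1/(2*real n+5)) - (1/4)*(1/(2*real n+5)^2))
        sums ((1/8)*(1/3) - (1/4)*(pi^2/8 - 10/9))"
    by (intro sums_diff sums_mult Tl O)
  have Teq: "T 0 = (\<lambda>m. (1/8)*(1/(2*real m+3) - 1/(2*real m+5)) - (1/4)*(1/(2*real m+5)^2))"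
  proof (rule ext)
    fix m
    have e: "cc (m+2) = cc (m+1) * (2*(2*real (m+1)+1)) / (real (m+1) + 1)"
      using cc_Suc[of "m+1"] by simp
    have "T 0 m = 1/(real(m+2)*real(2*m+5)*real(2*m+5)) * (cc(m+1)/cc(m+2))"
      unfolding T_def by simp
    also have "\<dots> = (1/8)*(1/(2*real m+3) - 1/(2*real m+5)) - (1/4)*(1/(2*real m+5)^2)"
      unfolding e
      apply (simp only: of_nat_add of_nat_mult of_nat_numeral of_nat_1)
      apply (rule base_alg) by (simp_all add: cc_pos)
    finally show "T 0 m = (1/8)*(1/(2*real m+3) - 1/(2*real m+5)) - (1/4)*(1/(2*real m+5)^2)" .
  qed
  have SSeq: "SS 0 = (1/8)*(1/3) - (1/4)*(pi^2/8 - 10/9)"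
    unfolding SS_def by (simp add: cc_def field_simps)
  show ?thesis unfolding Teq SSeq by (rule S1)
qed

lemma term_alg:
  fixes x y a b :: real assumes x: "x \<ge> 0" and y: "y \<ge> 0" and a: "a > 0" and b: "b > 0"
  shows "1/((x+2)*(2*x+5)*(2*x+2*(y+1)+5)) * (a/(b*(2*(2*(x+y+2)+1))/((x+y+2)+1)))
     = (2*y+1)/(8*(y+1)) * (1/((x+2)*(2*x+5)*(2*x+2*y+5)) * (a/b))
       + (a/b * (2*x+y+4)/(8*(y+1)^2*(y+2)*(2*x+2*y+5))
          - (a*(2*(2*(x+1)+1))/((x+1)+1)) / (b*(2*(2*(x+y+2)+1))/((x+y+2)+1))
            * (2*(x+1)+y+4)/(8*(y+1)^2*(y+2)*(2*(x+1)+2*y+5)))"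
proof -
  have nz: "x+2 \<noteq> 0" "2*x+5\<noteq>0" "2*x+3\<noteq>0" "a \<noteq> 0" "b \<noteq> 0" "y+1 \<noteq> 0" "y+2\<noteq>0"
    "2*x+2*y+5 \<noteq> 0" "2*x+2*y+7 \<noteq> 0" "x+y+3 \<noteq> 0" "x+1 \<noteq> 0" "2*x+2*(y+1)+5 \<noteq> 0"
    "2*(x+1)+2*y+5 \<noteq> 0" "2*(2*(x+y+2)+1) \<noteq> 0" "2*(2*(x+1)+1) \<noteq> 0" "(x+y+2)+1 \<noteq> 0" "(x+1)+1 \<noteq> 0"
    using x y a b by auto
  show ?thesis using nz x y a b by (simp add: divide_simps power2_eq_square) (simp add: algebra_simps)
qed

lemma rhs_alg:
  fixes y c c1 c2 x4 P :: real assumes y: "y \<ge> 0" and c: "c > 0" and x4: "x4 > 0"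
  and h1: "c1 = c*(2*(2*y+1))/(y+1)"
  and h2: "c2 = c1*(2*(2*(y+1)+1))/((y+1)+1)"
  shows "1/(2*(2*(y+1)+1)*c1) - 1/(3*(2*(y+1)+3)*c2)
     - 1/(8*x4) * (1/(4*((y+1)+1)) + c1/(2*(16*x4)) * (P + (4*x4)/((y+1)^2*c1)))
   = (2*y+1)/(8*(y+1)) * (1/(2*(2*y+1)*c) - 1/(3*(2*y+3)*c1)
       - 1/(2*x4) * (1/(4*(y+1)) + c/(2*(4*x4)) * P))
     + 2/c2 * (y+4)/(8*(y+1)^2*(y+2)*(2*y+5)) - 1/(8*(y+1)^2*(y+2)*(4*x4))"
proof -
  have nz: "c \<noteq> 0" "x4 \<noteq> 0" "y+1 \<noteq> 0" "y+2\<noteq>0" "2*y+1 \<noteq> 0" "2*y+3 \<noteq> 0" "2*y+5 \<noteq> 0"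
     "(y+1)+1 \<noteq> 0" "2*(2*(y+1)+1) \<noteq> 0" "2*(2*y+1) \<noteq> 0" "2*(y+1)+3 \<noteq> 0" "2*(y+1)+1 \<noteq> 0"
    using y c x4 by auto
  show ?thesis unfolding h2 unfolding h1 using nz by (simp add: divide_simps power2_eq_square) (simp add: algebra_simps)
qed

definition G :: "nat \<Rightarrow> nat \<Rightarrow> real" where
  "G s m = cc(m+1)/cc(m+s+2) * (2*real m + real s + 4)/(8*(real s+1)^2*(real s+2)*(2*real m+2*real s+5))"

lemma rs: "real (Suc n) = real n + 1" by simp

lemma step_term: "T (Suc s) m = (2*real s+1)/(8*(real s+1)) * T s m + (G s m - G s (Suc m))"
proof -
  have ea: "cc (Suc m + 1) = cc(m+1)*(2*(2*(real m+1)+1))/((real m+1)+1)"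
    using cc_Suc[of "m+1"] by simp
  have eb: "cc (m + Suc s + 2) = cc(m+s+2)*(2*(2*(real m+real s+2)+1))/((real m+real s+2)+1)"
    using cc_Suc[of "m+s+2"] by (simp add: algebra_simps)
  have eb2: "cc (Suc m + s + 2) = cc(m+s+2)*(2*(2*(real m+real s+2)+1))/((real m+real s+2)+1)"
    using eb by simp
  show ?thesis unfolding T_def G_def ea eb eb2
    apply (simp only: rs of_nat_add of_nat_mult of_nat_numeral)
    apply (rule term_alg)
    by (simp_all add: cc_pos)
qed

lemma step_rhs: "SS (Suc s) = (2*real s+1)/(8*(real s+1)) * SS s + G s 0 - 1/(8*(real s+1)^2*(real s+2)*(4*4^s))"
proof -
  define y where "y = real s"
  define c where "c = cc s"
  define c1 where "c1 = cc (Suc s)"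
  define c2 where "c2 = cc (Suc (Suc s))"
  define x4 :: real where "x4 = 4^s"
  define H where "H = (\<Sum>k=1..s. 4^k/(real k^2 * cc k))"
  have h1: "c1 = c*(2*(2*y+1))/(y+1)" unfolding c1_def c_def y_def by (rule cc_Suc)
  have h2: "c2 = c1*(2*(2*(y+1)+1))/((y+1)+1)" unfolding c2_def c1_def y_def using cc_Suc[of "Suc s"] by simp
  have p1: "(2::real)^(2 * s + 1) = 2*x4" unfolding x4_def by (simp add: power_add power_mult)
  have p2: "(4::real)^(s+1) = 4*x4" unfolding x4_def by simp
  have p3: "(2::real)^(2*Suc s+1) = 8*x4" unfolding x4_def by (simp add: power_add power_mult)
  have p4: "(4::real)^(Suc s+1) = 16*x4" unfolding x4_def by simp
  have p5: "(4::real)^(Suc s) = 4*x4" unfolding x4_def by simp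
  have e1: "SS (Suc s) = 1/(2*(2*(y+1)+1)*c1) - 1/(3*(2*(y+1)+3)*c2)
     - 1/(8*x4) * (1/(4*((y+1)+1)) + c1/(2*(16*x4)) * ((pi^2/2 + H) + (4*x4)/((y+1)^2*c1)))"
    unfolding SS_def p3 p4 sum.cl_ivl_Suc p5 H_def c1_def c2_def y_def by (simp add: add.assoc ac_simps)
  have e2: "SS s = 1/(2*(2*y+1)*c) - 1/(3*(2*y+3)*c1)
       - 1/(2*x4) * (1/(4*(y+1)) + c/(2*(4*x4)) * (pi^2/2 + H))"
    unfolding SS_def p1 p2 H_def c1_def c_def y_def by (simp add: ac_simps)
  have e3: "G s 0 = 2/c2 * (y+4)/(8*(y+1)^2*(y+2)*(2*y+5))"
    unfolding G_def c2_def y_def by (simp add: cc_def add.commute)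
  have e4: "1/(8*(real s+1)^2*(real s+2)*(4*4^s)) = 1/(8*(y+1)^2*(y+2)*(4*x4))"
    unfolding y_def x4_def by simp
  have e5: "(2*real s+1)/(8*(real s+1)) = (2*y+1)/(8*(y+1))" by (simp add: y_def)
  show ?thesis unfolding e1 e2 e3 e4 e5
    by (rule rhs_alg[OF _ _ _ h1 h2]) (auto simp: y_def c_def x4_def cc_pos)
qed

lemma G_lim: "G s \<longlonglongrightarrow> 1/(8*(real s+1)^2*(real s+2)*(4*4^s))"
proof -
  have r1: "(\<lambda>m. cc (Suc m)/cc (Suc m + Suc s)) \<longlonglongrightarrow> 1/4^(Suc s)"
    using LIMSEQ_Suc[OF cc_ratio_lim[of "Suc s"]] by simp
  have r2: "(\<lambda>m. (2*real m + (real s + 4))/(2*real m + (2*real s+5))) \<longlonglongrightarrow> 1"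
    by (rule lin_ratio) auto
  have "(\<lambda>m. cc (Suc m)/cc (Suc m + Suc s) * ((2*real m + (real s + 4))/(2*real m + (2*real s+5)))
          / (8*(real s+1)^2*(real s+2))) \<longlonglongrightarrow> 1/4^(Suc s) * 1 / (8*(real s+1)^2*(real s+2))"
    by (intro tendsto_intros r1 r2) auto
  moreover have "(\<lambda>m. cc (Suc m)/cc (Suc m + Suc s) * ((2*real m + (real s + 4))/(2*real m + (2*real s+5)))
          / (8*(real s+1)^2*(real s+2))) = G s"
    by (rule ext) (simp add: G_def mult_ac add_ac)
  moreover have "1/4^(Suc s) * 1 / (8*(real s+1)^2*(real s+2)) = 1/(8*(real s+1)^2*(real s+2)*(4*4^s))"
    by (simp add: mult_ac)
  ultimately show ?thesis by (simp only:)
qed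

lemma main_sums: "T r sums SS r"
proof (induction r)
  case 0
  then show ?case by (rule base)
next
  case (Suc s)
  have "(\<lambda>m. (2*real s+1)/(8*(real s+1)) * T s m + (G s m - G s (Suc m))) sums
        ((2*real s+1)/(8*(real s+1)) * SS s + (G s 0 - 1/(8*(real s+1)^2*(real s+2)*(4*4^s))))"
    by (intro sums_add sums_mult Suc.IH telescope_sums'[OF G_lim])
  moreover have "(\<lambda>m. (2*real s+1)/(8*(real s+1)) * T s m + (G s m - G s (Suc m))) = T (Suc s)"
    by (rule ext) (simp only: step_term)
  moreover have "(2*real s+1)/(8*(real s+1)) * SS s + (G s 0 - 1/(8*(real s+1)^2*(real s+2)*(4*4^s))) = SS (Suc s)"
    by (simp add: step_rhs)
  ultimately show ?case by simp
qed

theorem theorem5p0p5: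
  fixes r :: nat
  shows "(\<lambda>m. let n = m + 1 in
            1 / (real (n + 1) * real (2 * n + 3) * real (2 * n + 2 * r + 3))
            * (real (2 * n choose n) / real ((2 * n + 2 * r + 2) choose (n + r + 1))))
         sums
         (1 / (2 * real (2 * r + 1) * real (2 * r choose r))
          - 1 / (3 * real (2 * r + 3) * real ((2 * r + 2) choose (r + 1)))
          - 1 / 2 ^ (2 * r + 1) *
            (1 / (4 * real (r + 1))
             + real (2 * r choose r) / (2 * 4 ^ (r + 1)) *
               (pi ^ 2 / 2 + (\<Sum>k = 1..r. 4 ^ k / (real k ^ 2 * real (2 * k choose k))))))"
proof -
  have e1: "(\<lambda>m. let n = m + 1 in
            1 / (real (n + 1) * real (2 * n + 3) * real (2 * n + 2 * r + 3))
            * (real (2 * n choose n) / real ((2 * n + 2 * r + 2) choose (n + r + 1)))) = T r"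
  proof (rule ext)
    fix m
    have b: "((2 * (m+1) + 2 * r + 2) choose (m + 1 + r + 1)) = ((2*(m+r+2)) choose (m+r+2))"
      by (rule arg_cong2[where f=binomial]) simp_all
    show "(let n = m + 1 in
            1 / (real (n + 1) * real (2 * n + 3) * real (2 * n + 2 * r + 3))
            * (real (2 * n choose n) / real ((2 * n + 2 * r + 2) choose (n + r + 1)))) = T r m"
      unfolding Let_def b T_def cc_def by (simp add: algebra_simps)
  qed
  have b2: "((2 * r + 2) choose (r + 1)) = ((2*(r+1)) choose (r+1))" by simp
  have e2: "(1 / (2 * real (2 * r + 1) * real (2 * r choose r))
          - 1 / (3 * real (2 * r + 3) * real ((2 * r + 2) choose (r + 1)))
          - 1 / 2 ^ (2 * r + 1) *
            (1 / (4 * real (r + 1))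
             + real (2 * r choose r) / (2 * 4 ^ (r + 1)) *
               (pi ^ 2 / 2 + (\<Sum>k = 1..r. 4 ^ k / (real k ^ 2 * real (2 * k choose k)))))) = SS r"
    unfolding SS_def cc_def b2 ..
  show ?thesis unfolding e1 e2 by (rule main_sums)
qed

end
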